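(* Let $G$ be a finite simple graph, let $J\in \mathcal{E}\mathcal{C}(G)$, and let $e$ be a pair of distinct vertices of $G$. Then: (1) for $I\subseteq J$, $I\in\mathcal{E}\mathcal{C}(G)$ if and only if $I\in\mathcal{E}\mathcal{C}(G|_J)$; (2) for $J\subseteq I\subseteq V(G)$, $I\in\mathcal{E}\mathcal{C}(G)$ if and only if $I\setminus J\in\mathcal{E}\mathcal{C}(G^\ast_J)$; (3) $\mathcal{E}\mathcal{C}(G)\subseteq\mathcal{E}\mathcal{C}(G+e)$, and every $I\in\mathcal{E}\mathcal{C}(G+e)\setminus\mathcal{E}\mathcal{C}(G)$ satisfies $e\subseteq I$.
   Context: All graphs are finite simple graphs; $G|_I$ is the induced subgraph on $I\subseteq V(G)$. $\mathcal{E}\mathcal{C}(G)=\{I\subseteq V(G): G|_I \text{ has no connected component of odd order}\}$ (so $\emptyset\in\mathcal{E}\mathcal{C}(G)$). For a pair $e$ of distinct vertices, $G+e$ is the graph obtained from $G$ by adding $e$ as an edge ($G+e=G$ if $e$ is already an edge). The reconnected complement $G^\ast_I$ is the graph on $V(G)\setminus I$ in which $\{a,b\}$ is an edge iff there is a path from $a$ to $b$ in $G|_{I\cup\{a,b\}}$. *)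

theory Defs
  imports Main
begin

definition simple_graph :: "'a set \<Rightarrow> 'a set set \<Rightarrow> bool" where
  "simple_graph V E \<longleftrightarrow> finite V \<and> (\<forall>e\<in>E. e \<subseteq> V \<and> card e = 2)"

definition induced_edges :: "'a set set \<Rightarrow> 'a set \<Rightarrow> 'a set set" where
  "induced_edges E I = {e \<in> E. e \<subseteq> I}"

definition adj_rel :: "'a set \<Rightarrow> 'a set set \<Rightarrow> ('a \<times> 'a) set" where
  "adj_rel V E = {(x, y). x \<in> V \<and> y \<in> V \<and> {x, y} \<in> E}"

definition component :: "'a set \<Rightarrow> 'a set set \<Rightarrow> 'a \<Rightarrow> 'a set" where
  "component V E v = {u \<in> V. (v, u) \<in> (adj_rel V E)\<^sup>*}"

definition EC :: "'a set \<Rightarrow> 'a set set \<Rightarrow> 'a set set" where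
  "EC V E = {I. I \<subseteq> V \<and> (\<forall>v\<in>I. even (card (component I (induced_edges E I) v)))}"

text \<open>Edge set of the reconnected complement G^*_I (on vertex set V - I):
  {a,b} is an edge iff there is a path from a to b in G|_(I \<union> {a,b}).\<close>
definition reconnected_edges :: "'a set \<Rightarrow> 'a set set \<Rightarrow> 'a set \<Rightarrow> 'a set set" where
  "reconnected_edges V E I =
     {{a, b} | a b. a \<in> V - I \<and> b \<in> V - I \<and> a \<noteq> b \<and>
        (a, b) \<in> (adj_rel (I \<union> {a, b}) (induced_edges E (I \<union> {a, b})))\<^sup>*}"

end

theory Submission
  imports Defs
begin

definition adj :: "'a set set \<Rightarrow> 'a set \<Rightarrow> ('a \<times> 'a) set" where
  "adj E S = {(x, y). x \<in> S \<and> y \<in> S \<and> {x, y} \<in> E}"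

definition gcomp :: "'a set set \<Rightarrow> 'a set \<Rightarrow> 'a \<Rightarrow> 'a set" where
  "gcomp E S v = {u \<in> S. (v, u) \<in> (adj E S)\<^sup>*}"

lemma adj_rel_ind: "adj_rel S (induced_edges E S) = adj E S"
  unfolding adj_rel_def induced_edges_def adj_def by auto

lemma EC_iff: "I \<in> EC V E \<longleftrightarrow> I \<subseteq> V \<and> (\<forall>v\<in>I. even (card (gcomp E I v)))"
  unfolding EC_def component_def gcomp_def adj_rel_ind by auto

lemma adj_sym: "sym (adj E S)"
  unfolding sym_def adj_def by (auto simp: insert_commute)

lemma rtr_sym: "(x, y) \<in> (adj E S)\<^sup>* \<Longrightarrow> (y, x) \<in> (adj E S)\<^sup>*"
  using sym_rtrancl[OF adj_sym] by (rule symD)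

lemma rtr_in: "(x, y) \<in> (adj E S)\<^sup>* \<Longrightarrow> x = y \<or> (x \<in> S \<and> y \<in> S)"
  by (induction rule: rtrancl_induct) (auto simp: adj_def)

lemma adj_mono:
  assumes "S \<subseteq> S'" "E \<subseteq> E'" shows "(adj E S)\<^sup>* \<subseteq> (adj E' S')\<^sup>*"
proof (rule rtrancl_mono)
  show "adj E S \<subseteq> adj E' S'" unfolding adj_def using assms by blast
qed

lemma comp_class: "x \<in> gcomp E S w \<Longrightarrow> gcomp E S x = gcomp E S w"
  unfolding gcomp_def using rtr_sym[of w x E S]
  by (auto intro: rtrancl_trans)

lemma comp_self: "w \<in> S \<Longrightarrow> w \<in> gcomp E S w"
  unfolding gcomp_def by auto

lemma comp_sub: "gcomp E S w \<subseteq> S"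
  unfolding gcomp_def by auto

lemma even_union:
  assumes "finite J" "\<forall>w\<in>J. even (card (gcomp E J w))" "T \<subseteq> J"
    "\<forall>w\<in>T. gcomp E J w \<subseteq> T"
  shows "even (card T)"
proof -
  have T: "T = \<Union> (gcomp E J ` T)"
    using assms(3,4) comp_self[of _ J E] by blast
  have "2 dvd card (\<Union> (gcomp E J ` T))"
  proof (rule dvd_partition)
    show "finite (\<Union> (gcomp E J ` T))" using T assms(1,3) finite_subset by metis
    show "\<forall>c\<in>gcomp E J ` T. 2 dvd card c" using assms(2,3) by auto
    show "\<forall>c1\<in>gcomp E J ` T. \<forall>c2\<in>gcomp E J ` T. c1 \<noteq> c2 \<longrightarrow> c1 \<inter> c2 = {}"
    proof (intro ballI impI)
      fix c1 c2 assume c: "c1 \<in> gcomp E J ` T" "c2 \<in> gcomp E J ` T" "c1 \<noteq> c2"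
      then obtain w1 w2 where w: "c1 = gcomp E J w1" "c2 = gcomp E J w2" by blast
      show "c1 \<inter> c2 = {}"
      proof (rule ccontr)
        assume "c1 \<inter> c2 \<noteq> {}"
        then obtain x where "x \<in> c1" "x \<in> c2" by blast
        then have "c1 = gcomp E J x" "c2 = gcomp E J x" using w comp_class by metis+
        with c(3) show False by simp
      qed
    qed
  qed
  with T show ?thesis by simp
qed

lemma part3:
  assumes "finite V" "I \<in> EC V E"
  shows "I \<in> EC V (E \<union> {e})"
proof -
  have IV: "I \<subseteq> V" "\<forall>w\<in>I. even (card (gcomp E I w))" using assms(2) unfolding EC_iff by auto
  have fI: "finite I" using IV(1) assms(1) by (rule finite_subset)
  have "even (card (gcomp (E \<union> {e}) I v))" if v: "v \<in> I" for v
  proof (rule even_union[OF fI IV(2)])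
    show "gcomp (E \<union> {e}) I v \<subseteq> I" by (rule comp_sub)
    show "\<forall>w\<in>gcomp (E \<union> {e}) I v. gcomp E I w \<subseteq> gcomp (E \<union> {e}) I v"
    proof (intro ballI subsetI)
      fix w u assume w: "w \<in> gcomp (E \<union> {e}) I v" and u: "u \<in> gcomp E I w"
      have "(w, u) \<in> (adj E I)\<^sup>*" using u unfolding gcomp_def by simp
      then have "(w, u) \<in> (adj (E \<union> {e}) I)\<^sup>*" using adj_mono[of I I E "E \<union> {e}"] by auto
      moreover have "(v, w) \<in> (adj (E \<union> {e}) I)\<^sup>*" using w unfolding gcomp_def by simp
      ultimately have "(v, u) \<in> (adj (E \<union> {e}) I)\<^sup>*" by (meson rtrancl_trans)
      then show "u \<in> gcomp (E \<union> {e}) I v" using u unfolding gcomp_def by simp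
    qed
  qed
  then show ?thesis unfolding EC_iff using IV(1) by blast
qed

lemma part4:
  assumes "I \<in> EC V (E \<union> {e})" "\<not> e \<subseteq> I"
  shows "I \<in> EC V E"
proof -
  have "adj (E \<union> {e}) I = adj E I" using assms(2) unfolding adj_def by auto
  then have "gcomp (E \<union> {e}) I = gcomp E I" unfolding gcomp_def by (simp add: fun_eq_iff)
  then show ?thesis using assms(1) unfolding EC_iff by simp
qed

lemma part1:
  assumes "J \<subseteq> V" "I \<subseteq> J"
  shows "I \<in> EC V E \<longleftrightarrow> I \<in> EC J (induced_edges E J)"
proof -
  have "adj (induced_edges E J) I = adj E I" using assms(2)
    unfolding adj_def induced_edges_def by auto
  then have "gcomp (induced_edges E J) I = gcomp E I" unfolding gcomp_def by (simp add: fun_eq_iff)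
  moreover have "I \<subseteq> V" using assms by blast
  ultimately show ?thesis unfolding EC_iff using assms(2) by simp
qed

lemma R_adj:
  "adj (reconnected_edges V E J) S =
    {(x, y). x \<in> S \<and> y \<in> S \<and> (\<exists>a b. {x, y} = {a, b} \<and> a \<in> V - J \<and> b \<in> V - J \<and> a \<noteq> b \<and>
       (a, b) \<in> (adj E (J \<union> {a, b}))\<^sup>*)}"
  unfolding adj_def reconnected_edges_def adj_rel_ind by blast

lemma D_sub:
  assumes "J \<subseteq> I" "(a, u) \<in> (adj (reconnected_edges V E J) (I - J))\<^sup>*"
  shows "(a, u) \<in> (adj E I)\<^sup>*"
proof -
  have "adj (reconnected_edges V E J) (I - J) \<subseteq> (adj E I)\<^sup>*"
  proof safe
    fix x y assume "(x, y) \<in> adj (reconnected_edges V E J) (I - J)"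
    then obtain a b where xy: "x \<in> I" "y \<in> I" "{x, y} = {a, b}" and
      ab: "(a, b) \<in> (adj E (J \<union> {a, b}))\<^sup>*"
      unfolding R_adj by blast
    have "J \<union> {a, b} \<subseteq> I" using xy assms(1) by (auto simp: doubleton_eq_iff)
    then have "(a, b) \<in> (adj E I)\<^sup>*" using ab adj_mono by blast
    then show "(x, y) \<in> (adj E I)\<^sup>*" using xy(3) rtr_sym by (metis doubleton_eq_iff)
  qed
  then show ?thesis using assms(2) rtrancl_subset_rtrancl by blast
qed

lemma D_sup_aux:
  assumes "J \<subseteq> I" "I \<subseteq> V" "(a, u) \<in> (adj E I)\<^sup>*" "a \<in> I - J"
  shows "\<exists>c\<in>I - J. (a, c) \<in> (adj (reconnected_edges V E J) (I - J))\<^sup>* \<and>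
           (c, u) \<in> (adj E (insert c J))\<^sup>*"
  using assms(3)
proof (induction rule: rtrancl_induct)
  case base
  then show ?case using assms(4) by blast
next
  case (step u w)
  then obtain c where c: "c \<in> I - J" "(a, c) \<in> (adj (reconnected_edges V E J) (I - J))\<^sup>*"
    "(c, u) \<in> (adj E (insert c J))\<^sup>*" by blast
  have uw: "u \<in> I" "w \<in> I" "{u, w} \<in> E" using step(2) unfolding adj_def by auto
  have u: "u \<in> insert c J" using rtr_in[OF c(3)] by auto
  show ?case
  proof (cases "w \<in> J")
    case True
    have "(u, w) \<in> adj E (insert c J)" using u True uw unfolding adj_def by auto
    then show ?thesis using c by (meson rtrancl.rtrancl_into_rtrancl)
  next
    case False
    show ?thesis
    proof (cases "w = c")
      case True
      then show ?thesis using c by auto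
    next
      case wc: False
      have "(c, u) \<in> (adj E (J \<union> {c, w}))\<^sup>*" using c(3) adj_mono[of "insert c J" "J \<union> {c, w}" E E]
        by auto
      moreover have "(u, w) \<in> adj E (J \<union> {c, w})" using u uw unfolding adj_def by auto
      ultimately have p: "(c, w) \<in> (adj E (J \<union> {c, w}))\<^sup>*" by (meson rtrancl.rtrancl_into_rtrancl)
      have "(c, w) \<in> adj (reconnected_edges V E J) (I - J)"
        unfolding R_adj using c(1) False uw(2) wc p assms(2) by blast
      then have "(a, w) \<in> (adj (reconnected_edges V E J) (I - J))\<^sup>*"
        using c(2) by (meson rtrancl.rtrancl_into_rtrancl)
      then show ?thesis using False uw(2) by blast
    qed
  qed
qed

lemma D_eq:
  assumes "J \<subseteq> I" "I \<subseteq> V" "a \<in> I - J"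
  shows "gcomp (reconnected_edges V E J) (I - J) a = gcomp E I a - J"
proof safe
  fix u assume "u \<in> gcomp (reconnected_edges V E J) (I - J) a"
  then show "u \<in> gcomp E I a" using D_sub[OF assms(1)] unfolding gcomp_def by auto
next
  fix u assume "u \<in> gcomp (reconnected_edges V E J) (I - J) a" "u \<in> J"
  then show False unfolding gcomp_def by auto
next
  fix u assume u: "u \<in> gcomp E I a" "u \<notin> J"
  then obtain c where c: "c \<in> I - J" "(a, c) \<in> (adj (reconnected_edges V E J) (I - J))\<^sup>*"
           "(c, u) \<in> (adj E (insert c J))\<^sup>*"
    using D_sup_aux[OF assms(1,2) _ assms(3)] unfolding gcomp_def by blast
  have "u = c" using rtr_in[OF c(3)] u(2) by auto
  then show "u \<in> gcomp (reconnected_edges V E J) (I - J) a" using c u unfolding gcomp_def by auto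
qed

lemma C_parity:
  assumes "finite V" "J \<in> EC V E" "J \<subseteq> I" "I \<subseteq> V"
  shows "even (card (gcomp E I v)) \<longleftrightarrow> even (card (gcomp E I v - J))"
proof -
  have JV: "J \<subseteq> V" "\<forall>w\<in>J. even (card (gcomp E J w))" using assms(2) unfolding EC_iff by auto
  have fJ: "finite J" using JV(1) assms(1) by (rule finite_subset)
  have fC: "finite (gcomp E I v)" using comp_sub[of E I v] assms(1,4) by (meson finite_subset subset_trans)
  have ev: "even (card (gcomp E I v \<inter> J))"
  proof (rule even_union[OF fJ JV(2)])
    show "gcomp E I v \<inter> J \<subseteq> J" by blast
    show "\<forall>w\<in>gcomp E I v \<inter> J. gcomp E J w \<subseteq> gcomp E I v \<inter> J"
    proof (intro ballI subsetI IntI)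
      fix w u assume w0: "w \<in> gcomp E I v \<inter> J" and u: "u \<in> gcomp E J w"
      have w: "w \<in> gcomp E I v" using w0 by blast
      have "(w, u) \<in> (adj E J)\<^sup>*" using u unfolding gcomp_def by simp
      then have "(w, u) \<in> (adj E I)\<^sup>*" using adj_mono[OF assms(3) subset_refl] by blast
      moreover have "(v, w) \<in> (adj E I)\<^sup>*" using w unfolding gcomp_def by simp
      ultimately have "(v, u) \<in> (adj E I)\<^sup>*" by (meson rtrancl_trans)
      moreover have "u \<in> J" using u comp_sub[of E J w] by blast
      ultimately show "u \<in> gcomp E I v" using assms(3) unfolding gcomp_def by blast
      show "u \<in> J" by fact
    qed
  qed
  have "card (gcomp E I v) = card (gcomp E I v \<inter> J) + card (gcomp E I v - J)"
    using fC by (rule card_Int_Diff)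
  then show ?thesis using ev by presburger
qed

lemma part2:
  assumes "finite V" "J \<in> EC V E" "J \<subseteq> I" "I \<subseteq> V"
  shows "I \<in> EC V E \<longleftrightarrow> I - J \<in> EC (V - J) (reconnected_edges V E J)"
proof
  assume I: "I \<in> EC V E"
  have ev: "\<forall>v\<in>I. even (card (gcomp E I v))" using I unfolding EC_iff by blast
  have "even (card (gcomp (reconnected_edges V E J) (I - J) a))" if a: "a \<in> I - J" for a
  proof -
    have "even (card (gcomp E I a))" using ev a by blast
    then have "even (card (gcomp E I a - J))" using C_parity[OF assms, of a] by blast
    then show ?thesis using D_eq[OF assms(3,4) a] by metis
  qed
  moreover have "I - J \<subseteq> V - J" using assms(4) by blast
  ultimately show "I - J \<in> EC (V - J) (reconnected_edges V E J)"
    unfolding EC_iff by blast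
next
  assume I: "I - J \<in> EC (V - J) (reconnected_edges V E J)"
  have ev: "\<forall>a\<in>I - J. even (card (gcomp (reconnected_edges V E J) (I - J) a))"
    using I unfolding EC_iff by blast
  have "even (card (gcomp E I v))" if v: "v \<in> I" for v
  proof (cases "gcomp E I v - J = {}")
    case True
    then show ?thesis using C_parity[OF assms, of v] by (metis card.empty even_zero)
  next
    case False
    then obtain a where a: "a \<in> gcomp E I v" "a \<notin> J" by blast
    have aI: "a \<in> I - J" using a comp_sub[of E I v] by blast
    have "even (card (gcomp (reconnected_edges V E J) (I - J) a))" using ev aI by blast
    then have "even (card (gcomp E I a - J))" using D_eq[OF assms(3,4) aI] by metis
    then have "even (card (gcomp E I a))" using C_parity[OF assms, of a] by blast
    then show ?thesis using comp_class[OF a(1)] by metis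
  qed
  then show "I \<in> EC V E" unfolding EC_iff using assms(4) by blast
qed

theorem mainTheorem4:
  fixes V :: "'a set" and E :: "'a set set" and J :: "'a set" and e :: "'a set"
  assumes G: "simple_graph V E"
    and J: "J \<in> EC V E"
    and e: "e \<subseteq> V" "card e = 2"
  shows "(\<forall>I. I \<subseteq> J \<longrightarrow> (I \<in> EC V E \<longleftrightarrow> I \<in> EC J (induced_edges E J)))
       \<and> (\<forall>I. J \<subseteq> I \<and> I \<subseteq> V \<longrightarrow>
              (I \<in> EC V E \<longleftrightarrow> I - J \<in> EC (V - J) (reconnected_edges V E J)))
       \<and> EC V E \<subseteq> EC V (E \<union> {e})
       \<and> (\<forall>I \<in> EC V (E \<union> {e}) - EC V E. e \<subseteq> I)"
proof -
  have fV: "finite V" using G simple_graph_def by blast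
  have JV: "J \<subseteq> V" using J unfolding EC_iff by blast
  have A: "\<forall>I. I \<subseteq> J \<longrightarrow> (I \<in> EC V E \<longleftrightarrow> I \<in> EC J (induced_edges E J))"
    using part1[OF JV] by blast
  have B: "\<forall>I. J \<subseteq> I \<and> I \<subseteq> V \<longrightarrow>
              (I \<in> EC V E \<longleftrightarrow> I - J \<in> EC (V - J) (reconnected_edges V E J))"
    using part2[OF fV J] by blast
  have C: "EC V E \<subseteq> EC V (E \<union> {e})" using part3[OF fV] by blast
  have D: "\<forall>I \<in> EC V (E \<union> {e}) - EC V E. e \<subseteq> I" using part4[of _ V E e] by blast
  show ?thesis using A B C D by (intro conjI)
qed

end
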